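(* Let $n\ge 4$ and $t\in[n-1]$ be integers, and let $S$ be a weak $(2n-2t-1)$-resolving set of $K_n\times K_n$, with $\overline S=V\setminus S$. For all distinct $i,i'\in[n]$: if there is some $j\in[n]$ with $(i,j)\in\overline S$ and $(i',j)\in\overline S$, then $|(L_i\cup L_{i'})\cap\overline S|\le 2t+1$; otherwise $|(L_i\cup L_{i'})\cap\overline S|\le 2t+2$.
   Context: $K_n\times K_n$ is the direct product of two complete graphs on $n$ vertices: vertex set $V=[n]\times[n]$ with $[n]=\{1,\dots,n\}$, and $(i,j)$ adjacent to $(i',j')$ iff $i\ne i'$ and $j\ne j'$. For $i\in[n]$, $L_i=\{(i,j):j\in[n]\}$ is a vertical layer. For vertices $x,y,z$ and $S\subseteq V$, $\Delta_z(x,y)=|d(x,z)-d(y,z)|$ (with $d$ the graph distance) and $\Delta_S(x,y)=\sum_{z\in S}\Delta_z(x,y)$. A set $S$ is a weak $k$-resolving set if $\Delta_S(x,y)\ge k$ for all distinct $x,y\in V$. *)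

theory Defs
  imports Main
begin

definition V :: "nat \<Rightarrow> (nat \<times> nat) set" where
  "V n = {1..n} \<times> {1..n}"

definition adj :: "nat \<Rightarrow> nat \<times> nat \<Rightarrow> nat \<times> nat \<Rightarrow> bool" where
  "adj n x y \<longleftrightarrow> x \<in> V n \<and> y \<in> V n \<and> fst x \<noteq> fst y \<and> snd x \<noteq> snd y"

inductive walk :: "nat \<Rightarrow> nat \<Rightarrow> nat \<times> nat \<Rightarrow> nat \<times> nat \<Rightarrow> bool" for n where
  walk0: "x \<in> V n \<Longrightarrow> walk n 0 x x"
| walkS: "adj n x y \<Longrightarrow> walk n k y z \<Longrightarrow> walk n (Suc k) x z"

text \<open>Graph distance (the graph is connected for n >= 3).\<close>
definition dist :: "nat \<Rightarrow> nat \<times> nat \<Rightarrow> nat \<times> nat \<Rightarrow> nat" where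
  "dist n x y = (LEAST k. walk n k x y)"

definition Delta :: "nat \<Rightarrow> nat \<times> nat \<Rightarrow> nat \<times> nat \<Rightarrow> nat \<times> nat \<Rightarrow> nat" where
  "Delta n z x y = nat \<bar>int (dist n x z) - int (dist n y z)\<bar>"

definition DeltaS :: "nat \<Rightarrow> (nat \<times> nat) set \<Rightarrow> nat \<times> nat \<Rightarrow> nat \<times> nat \<Rightarrow> nat" where
  "DeltaS n S x y = (\<Sum>z\<in>S. Delta n z x y)"

definition weak_k_resolving :: "nat \<Rightarrow> nat \<Rightarrow> (nat \<times> nat) set \<Rightarrow> bool" where
  "weak_k_resolving n k S \<longleftrightarrow> S \<subseteq> V n \<and>
     (\<forall>x\<in>V n. \<forall>y\<in>V n. x \<noteq> y \<longrightarrow> DeltaS n S x y \<ge> k)"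

definition layer :: "nat \<Rightarrow> nat \<Rightarrow> (nat \<times> nat) set" where
  "layer n i = {(i, j) | j. j \<in> {1..n}}"

end

theory Submission
  imports Defs
begin

lemma walk_V: "walk n k x y \<Longrightarrow> x \<in> V n \<and> y \<in> V n"
  by (induction rule: walk.induct) (auto simp: adj_def)

lemma walk_0: "walk n 0 x y \<Longrightarrow> x = y"
  by (erule walk.cases) auto

lemma walk_1: "walk n (Suc 0) x y \<Longrightarrow> adj n x y"
  by (erule walk.cases) (auto dest: walk_0)

lemma pick3: "\<exists>e::nat. e \<in> {1..3} \<and> e \<noteq> a \<and> e \<noteq> c"
proof -
  define e where "e = (if 1 \<noteq> a \<and> 1 \<noteq> c then 1 else if 2 \<noteq> a \<and> 2 \<noteq> c then (2::nat) else 3)"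
  have "e \<in> {1..3} \<and> e \<noteq> a \<and> e \<noteq> c" unfolding e_def by auto
  then show ?thesis by blast
qed

lemma dist_eq:
  assumes "n \<ge> 3" "x \<in> V n" "z \<in> V n"
  shows "dist n x z = (if x = z then 0 else if fst x \<noteq> fst z \<and> snd x \<noteq> snd z then 1 else 2)"
proof (cases "x = z")
  case True
  then show ?thesis unfolding dist_def using assms
    by (intro Least_equality) (auto intro: walk0)
next
  case False
  note ne = False
  show ?thesis
  proof (cases "fst x \<noteq> fst z \<and> snd x \<noteq> snd z")
    case True
    have w: "walk n 1 x z" using True assms
      by (auto intro!: walkS[of n x z] walk0 simp: adj_def)
    have "dist n x z = 1" unfolding dist_def
    proof (rule Least_equality)
      show "walk n 1 x z" by (rule w)
      fix k assume "walk n k x z" then show "1 \<le> k" using ne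
        by (cases k) (auto dest: walk_0)
    qed
    then show ?thesis using ne True by simp
  next
    case F: False
    obtain a b c d where xz: "x = (a,b)" "z = (c,d)" by (cases x, cases z) auto
    obtain e where e: "e \<in> {1..3}" "e \<noteq> a" "e \<noteq> c" using pick3 by blast
    obtain f where f: "f \<in> {1..3}" "f \<noteq> b" "f \<noteq> d" using pick3 by blast
    have eV: "(e,f) \<in> V n" using e f assms(1) by (auto simp: V_def)
    have a1: "adj n x (e,f)" using assms eV e f xz by (auto simp: adj_def)
    have a2: "adj n (e,f) z" using assms eV e f xz by (auto simp: adj_def)
    have w: "walk n 2 x z" unfolding numeral_2_eq_2
      by (rule walkS[OF a1], rule walkS[OF a2], rule walk0, rule assms(3))
    have "dist n x z = 2" unfolding dist_def
    proof (rule Least_equality)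
      show "walk n 2 x z" by (rule w)
      fix k assume k: "walk n k x z" show "2 \<le> k"
      proof (rule ccontr)
        assume "\<not> 2 \<le> k"
        then have "k = 0 \<or> k = Suc 0" by auto
        then show False using k ne F by (auto dest: walk_0 walk_1 simp: adj_def)
      qed
    qed
    then show ?thesis using ne F by simp
  qed
qed

lemma Delta_col:
  assumes n: "n \<ge> 3" and x: "(i,j) \<in> V n" and y: "(i',j) \<in> V n" and ii: "i \<noteq> i'"
    and z: "z \<in> V n"
  shows "Delta n z (i,j) (i',j) =
     (if fst z = i \<or> fst z = i' then 1 else 0) + (if z = (i,j) then 1 else 0) + (if z = (i',j) then 1 else 0)"
proof -
  obtain a b where zz: "z = (a,b)" by (cases z) auto
  show ?thesis
    using dist_eq[OF n x z] dist_eq[OF n y z] ii unfolding Delta_def zz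
    by auto
qed

lemma card_layer: "card (layer n i) = n"
proof -
  have "layer n i = (\<lambda>j. (i,j)) ` {1..n}" unfolding layer_def by auto
  moreover have "inj_on (\<lambda>j. (i,j)) {1..n}" by (auto simp: inj_on_def)
  ultimately show ?thesis by (simp add: card_image)
qed

lemma layer_sub: "i \<in> {1..n} \<Longrightarrow> layer n i \<subseteq> V n"
  unfolding layer_def V_def by auto

lemma finV: "finite (V n)" unfolding V_def by auto

theorem mainTheorem10:
  fixes n t :: nat and S :: "(nat \<times> nat) set"
  assumes "n \<ge> 4" and "t \<in> {1..n-1}"
    and "weak_k_resolving n (2*n - 2*t - 1) S"
    and "i \<in> {1..n}" and "i' \<in> {1..n}" and "i \<noteq> i'"
  shows "((\<exists>j\<in>{1..n}. (i, j) \<in> V n - S \<and> (i', j) \<in> V n - S) \<longrightarrow>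
            card ((layer n i \<union> layer n i') \<inter> (V n - S)) \<le> 2*t + 1)
       \<and> (\<not> (\<exists>j\<in>{1..n}. (i, j) \<in> V n - S \<and> (i', j) \<in> V n - S) \<longrightarrow>
            card ((layer n i \<union> layer n i') \<inter> (V n - S)) \<le> 2*t + 2)"
proof -
  define L where "L = layer n i \<union> layer n i'"
  have n3: "n \<ge> 3" using assms(1) by simp
  have SV: "S \<subseteq> V n" and res: "\<And>x y. x \<in> V n \<Longrightarrow> y \<in> V n \<Longrightarrow> x \<noteq> y \<Longrightarrow> DeltaS n S x y \<ge> 2*n - 2*t - 1"
    using assms(3) unfolding weak_k_resolving_def by auto
  have finS: "finite S" using SV finV finite_subset by blast
  have LV: "L \<subseteq> V n" unfolding L_def using layer_sub assms(4,5) by blast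
  have finL: "finite L" using LV finV finite_subset by blast
  have disj: "layer n i \<inter> layer n i' = {}" using assms(6) unfolding layer_def by auto
  have cardL: "card L = 2*n" unfolding L_def
    using card_Un_disjoint[OF _ _ disj] card_layer by (simp add: layer_def)
  have split: "card (L \<inter> (V n - S)) + card (L \<inter> S) = 2*n"
  proof -
    have "L = (L \<inter> (V n - S)) \<union> (L \<inter> S)" using LV by auto
    then have "card L = card (L \<inter> (V n - S)) + card (L \<inter> S)"
      using finL by (metis card_Un_disjoint Diff_disjoint Int_Diff Int_Diff_disjoint Int_commute finite_Int inf_assoc Diff_Int_distrib2 Int_absorb)
    then show ?thesis using cardL by simp
  qed
  have LS: "\<And>z. z \<in> L \<longleftrightarrow> z \<in> V n \<and> (fst z = i \<or> fst z = i')"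
    unfolding L_def layer_def V_def using assms(4,5) by auto
  have DS: "DeltaS n S (i,j) (i',j) = card (L \<inter> S) + (if (i,j) \<in> S then 1 else 0) + (if (i',j) \<in> S then 1 else 0)"
    if j: "j \<in> {1..n}" for j
  proof -
    have x: "(i,j) \<in> V n" and y: "(i',j) \<in> V n" using j assms(4,5) by (auto simp: V_def)
    have "DeltaS n S (i,j) (i',j) = (\<Sum>z\<in>S. (if fst z = i \<or> fst z = i' then 1 else 0) + (if z = (i,j) then 1 else 0) + (if z = (i',j) then 1 else 0))"
      unfolding DeltaS_def using Delta_col[OF n3 x y assms(6)] SV by (intro sum.cong) blast+
    also have "\<dots> = (\<Sum>z\<in>S. (if fst z = i \<or> fst z = i' then 1 else 0)) + (\<Sum>z\<in>S. (if z = (i,j) then 1 else 0)) + (\<Sum>z\<in>S. (if z = (i',j) then (1::nat) else 0))"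
      by (simp add: sum.distrib)
    also have "(\<Sum>z\<in>S. (if fst z = i \<or> fst z = i' then 1 else 0)) = card (L \<inter> S)"
    proof -
      have "(\<Sum>z\<in>S. (if fst z = i \<or> fst z = i' then 1 else (0::nat))) = card {z \<in> S. fst z = i \<or> fst z = i'}"
        using finS by (simp add: sum.If_cases Int_def)
      also have "{z \<in> S. fst z = i \<or> fst z = i'} = L \<inter> S" using LS SV by auto
      finally show ?thesis .
    qed
    finally show ?thesis using finS by simp
  qed
  have xy: "(i,j) \<in> V n" "(i',j) \<in> V n" "(i,j) \<noteq> (i',j)" if "j \<in> {1..n}" for j
    using that assms(4,5,6) by (auto simp: V_def)
  have t: "1 \<le> t" "t \<le> n - 1" using assms(2) by auto
  show ?thesis
  proof (intro conjI impI)
    assume "\<exists>j\<in>{1..n}. (i, j) \<in> V n - S \<and> (i', j) \<in> V n - S"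
    then obtain j where j: "j \<in> {1..n}" "(i,j) \<notin> S" "(i',j) \<notin> S" by auto
    have "DeltaS n S (i,j) (i',j) \<ge> 2*n - 2*t - 1" using res xy[OF j(1)] by blast
    then have "card (L \<inter> S) \<ge> 2*n - 2*t - 1" using DS[OF j(1)] j by simp
    then show "card ((layer n i \<union> layer n i') \<inter> (V n - S)) \<le> 2*t + 1"
      using split t unfolding L_def[symmetric] by linarith
  next
    assume nex: "\<not> (\<exists>j\<in>{1..n}. (i, j) \<in> V n - S \<and> (i', j) \<in> V n - S)"
    show "card ((layer n i \<union> layer n i') \<inter> (V n - S)) \<le> 2*t + 2"
    proof (cases "L \<inter> (V n - S) = {}")
      case True then show ?thesis unfolding L_def[symmetric] by simp
    next
      case False
      then obtain a b where ab: "(a,b) \<in> L" "(a,b) \<in> V n" "(a,b) \<notin> S" by auto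
      have b: "b \<in> {1..n}" using ab(2) by (auto simp: V_def)
      have one: "(if (i,b) \<in> S then 1 else 0) + (if (i',b) \<in> S then 1 else (0::nat)) \<le> 1"
        using ab LS[of "(a,b)"] nex xy[OF b] b by auto
      have "DeltaS n S (i,b) (i',b) \<ge> 2*n - 2*t - 1" using res xy[OF b] by blast
      then have "card (L \<inter> S) + 1 \<ge> 2*n - 2*t - 1" using DS[OF b] one by linarith
      then show ?thesis using split t unfolding L_def[symmetric] by linarith
    qed
  qed
qed

end
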